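(* Let $n\ge2\times10^3$, let $m=(n-1)/2$ if $n$ is odd and $m=n/2-1$ if $n$ is even, with $0.247m,0.339m,0.414m$ integers, and let $T=\{f_1,\dots,f_k\}\subset[0,1)$ have wrap-around minimum separation at least $2.52/(n-1)$. Then there is a fixed numerical constant $C_{\bar v}$ (independent of $n$, $k$, $T$) such that $\|\bar v_\ell(f)\|_2\le C_{\bar v}$ for all $f\in[0,1]$ and all $\ell\in\{0,1,2,3\}$.
   Context: $\bar K=\mathcal{D}_{0.247m}\mathcal{D}_{0.339m}\mathcal{D}_{0.414m}$ with $\mathcal{D}_{\tilde m}(f)=\frac{1}{2\tilde m+1}\sum_{l=-\tilde m}^{\tilde m}e^{i2\pi lf}$; $\kappa=|\bar K''(0)|^{-1/2}$; $\bar K^{(\ell)}$ is the $\ell$-th derivative. $\bar v_\ell(f)=\kappa^\ell\big(\bar K^{(\ell)}(f-f_1),\dots,\bar K^{(\ell)}(f-f_k),\ \kappa\bar K^{(\ell+1)}(f-f_1),\dots,\kappa\bar K^{(\ell+1)}(f-f_k)\big)^T\in\mathbb{C}^{2k}$. *)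

theory Defs
  imports "HOL-Analysis.Analysis"
begin

definition dirichlet :: "int \<Rightarrow> real \<Rightarrow> complex" where
  "dirichlet mt f = (1 / of_int (2 * mt + 1)) *
     (\<Sum>l\<in>{-mt..mt}. exp (\<i> * 2 * of_real pi * of_int l * of_real f))"

definition m_of :: "nat \<Rightarrow> nat" where
  "m_of n = (if odd n then (n - 1) div 2 else n div 2 - 1)"

text \<open>The kernel K-bar = D_{0.247m} D_{0.339m} D_{0.414m} (indices meant to be integers).\<close>
definition Kbar :: "nat \<Rightarrow> real \<Rightarrow> complex" where
  "Kbar n f = dirichlet \<lfloor>0.247 * real (m_of n)\<rfloor> f *
              dirichlet \<lfloor>0.339 * real (m_of n)\<rfloor> f *
              dirichlet \<lfloor>0.414 * real (m_of n)\<rfloor> f"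

definition higher_deriv :: "nat \<Rightarrow> (real \<Rightarrow> complex) \<Rightarrow> real \<Rightarrow> complex" where
  "higher_deriv l g = ((\<lambda>h x. vector_derivative h (at x)) ^^ l) g"

definition kappa :: "nat \<Rightarrow> real" where
  "kappa n = (norm (higher_deriv 2 (Kbar n) 0)) powr (-1/2)"

text \<open>Euclidean norm of v_l(f) in C^{2k}, with the k entries indexed by the points of T.\<close>
definition vbar_norm :: "nat \<Rightarrow> real set \<Rightarrow> nat \<Rightarrow> real \<Rightarrow> real" where
  "vbar_norm n T l f = sqrt (\<Sum>t\<in>T.
      (norm (complex_of_real (kappa n ^ l) * higher_deriv l (Kbar n) (f - t)))\<^sup>2 +
      (norm (complex_of_real (kappa n ^ l * kappa n) * higher_deriv (Suc l) (Kbar n) (f - t)))\<^sup>2)"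

definition wrap_dist :: "real \<Rightarrow> real \<Rightarrow> real" where
  "wrap_dist x y = \<bar>(x - y) - of_int (round (x - y))\<bar>"

end

theory Submission
  imports Defs
begin


definition tp :: "('a \<Rightarrow> complex) \<Rightarrow> ('a \<Rightarrow> real) \<Rightarrow> 'a set \<Rightarrow> real \<Rightarrow> complex" where
  "tp c w S x = (\<Sum>p\<in>S. c p * exp (\<i> * of_real (2*pi*w p) * of_real x))"

lemma tp_deriv:
  "(tp c w S has_vector_derivative tp (\<lambda>p. c p * (\<i> * of_real (2*pi*w p))) w S x) (at x)"
proof -
  have "((\<lambda>x. c p * exp (\<i> * of_real (2*pi*w p) * of_real x)) has_vector_derivative
        c p * (\<i> * of_real (2*pi*w p)) * exp (\<i> * of_real (2*pi*w p) * of_real x)) (at x)" for p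
  proof -
    have "((\<lambda>z. c p * exp (\<i> * of_real (2*pi*w p) * z)) has_field_derivative
        c p * (exp (\<i> * of_real (2*pi*w p) * of_real x) * (\<i> * of_real (2*pi*w p)))) (at (of_real x))"
      by (auto intro!: derivative_eq_intros)
    from has_vector_derivative_real_field[OF this] show ?thesis by (simp add: ac_simps)
  qed
  then show ?thesis unfolding tp_def[abs_def]
    by (auto intro!: has_vector_derivative_sum simp: mult.assoc)
qed

lemma higher_deriv_tp:
  "higher_deriv j (tp c w S) = tp (\<lambda>p. c p * (\<i> * of_real (2*pi*w p))^j) w S"
proof (induction j)
  case 0 then show ?case by (simp add: higher_deriv_def)
next
  case (Suc j)
  have "higher_deriv (Suc j) (tp c w S) = (\<lambda>x. vector_derivative (higher_deriv j (tp c w S)) (at x))"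
    by (simp add: higher_deriv_def)
  also have "\<dots> = tp (\<lambda>p. c p * (\<i> * of_real (2*pi*w p))^j * (\<i> * of_real (2*pi*w p))) w S"
    unfolding Suc by (rule ext, rule vector_derivative_at, rule tp_deriv)
  finally show ?case by (simp only: power_Suc2 mult.assoc)
qed



lemma abel_identity:
  fixes g :: "nat \<Rightarrow> real" and u :: "nat \<Rightarrow> complex"
  shows "(\<Sum>k\<le>N. of_real (g k) * u k) =
    of_real (g N) * (\<Sum>i\<le>N. u i) - (\<Sum>k<N. of_real (g (Suc k) - g k) * (\<Sum>i\<le>k. u i))"
proof (induction N)
  case 0 then show ?case by simp
next
  case (Suc N)
  show ?case unfolding sum.atMost_Suc sum.lessThan_Suc Suc
    by (simp add: algebra_simps)
qed

lemma abel_bound: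
  fixes g :: "nat \<Rightarrow> real" and u :: "nat \<Rightarrow> complex"
  assumes "\<And>r. r \<le> N \<Longrightarrow> norm (\<Sum>i\<le>r. u i) \<le> B"
  shows "norm (\<Sum>k\<le>N. of_real (g k) * u k) \<le> B * (\<bar>g N\<bar> + (\<Sum>k<N. \<bar>g (Suc k) - g k\<bar>))"
proof -
  have B0: "0 \<le> B" using assms[of 0] norm_ge_zero[of "\<Sum>i\<le>0. u i"] by linarith
  have "norm (\<Sum>k\<le>N. of_real (g k) * u k) \<le> norm (of_real (g N) * (\<Sum>i\<le>N. u i))
      + norm (\<Sum>k<N. of_real (g (Suc k) - g k) * (\<Sum>i\<le>k. u i))"
    unfolding abel_identity by (rule norm_triangle_ineq4)
  also have "norm (of_real (g N) * (\<Sum>i\<le>N. u i)) \<le> \<bar>g N\<bar> * B"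
    unfolding norm_mult norm_of_real by (rule mult_left_mono, rule assms, auto)
  also have "norm (\<Sum>k<N. of_real (g (Suc k) - g k) * (\<Sum>i\<le>k. u i)) \<le>
      (\<Sum>k<N. \<bar>g (Suc k) - g k\<bar> * B)"
    apply (rule order_trans[OF norm_sum], rule sum_mono)
    unfolding norm_mult norm_of_real by (rule mult_left_mono, rule assms, auto)
  finally show ?thesis by (simp add: sum_distrib_left algebra_simps)
qed

lemma geom_bound:
  fixes z :: complex assumes "norm z = 1"
  shows "norm (\<Sum>i\<le>r. z^i) * norm (1 - z) \<le> 2"
proof -
  have "norm (\<Sum>i\<le>r. z^i) * norm (1 - z) = norm (1 - z ^ Suc r)"
    using sum_gp_basic[of z r] by (metis mult.commute norm_mult)
  also have "\<dots> \<le> norm (1::complex) + norm (z ^ Suc r)" by (rule norm_triangle_ineq4)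
  also have "\<dots> = 2" using assms by (simp add: norm_power norm_mult)
  finally show ?thesis .
qed

lemma power_diff_bound:
  fixes x y L :: real
  assumes "\<bar>x\<bar> \<le> L" "\<bar>y\<bar> \<le> L"
  shows "\<bar>x^j - y^j\<bar> \<le> real j * L^(j - 1) * \<bar>x - y\<bar>"
proof (induction j)
  case 0 then show ?case by simp
next
  case (Suc j)
  have L0: "0 \<le> L" using assms by linarith
  have "x^Suc j - y^Suc j = x * (x^j - y^j) + y^j * (x - y)" by (simp add: algebra_simps)
  then have "\<bar>x^Suc j - y^Suc j\<bar> \<le> \<bar>x\<bar> * \<bar>x^j - y^j\<bar> + \<bar>y\<bar>^j * \<bar>x - y\<bar>"
    by (metis abs_mult abs_triangle_ineq power_abs)
  also have "\<dots> \<le> L * (real j * L^(j - 1) * \<bar>x - y\<bar>) + L^j * \<bar>x - y\<bar>"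
    apply (intro add_mono mult_mono Suc power_mono) using assms L0 by auto
  also have "L * (real j * L^(j - 1) * \<bar>x - y\<bar>) = real j * L^j * \<bar>x - y\<bar>"
    by (cases j) (auto simp: algebra_simps)
  finally show ?case by (simp add: algebra_simps)
qed



lemma norm_one_minus_ee:
  "norm (1 - exp (\<i> * of_real (2*pi*x))) = 2 * \<bar>sin (pi*x)\<bar>"
proof -
  have e: "exp (\<i> * of_real (2*pi*x)) = Complex (cos (2*pi*x)) (sin (2*pi*x))"
    by (subst cis_conv_exp[symmetric]) (simp add: complex_eq_iff)
  have "(norm (1 - exp (\<i> * of_real (2*pi*x))))^2 = (1 - cos (2*pi*x))^2 + (sin (2*pi*x))^2"
    unfolding e by (simp add: cmod_def)
  also have "\<dots> = 2 - 2 * cos (2*(pi*x))" 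
    using sin_cos_squared_add[of "2*pi*x"] by (simp add: power2_eq_square algebra_simps)
  also have "\<dots> = (2 * \<bar>sin (pi*x)\<bar>)^2" unfolding cos_double_sin by (simp add: power2_eq_square)
  finally show ?thesis by (subst (asm) power2_eq_iff_nonneg) auto
qed

lemma sin_lower:
  fixes x :: real assumes "\<bar>x\<bar> \<le> 1/2"
  shows "\<bar>x\<bar> \<le> \<bar>sin (pi*x)\<bar>"
proof -
  define y where "y = pi * \<bar>x\<bar>"
  have y0: "0 \<le> y" by (auto simp: y_def)
  have "pi * \<bar>x\<bar> \<le> 4 * (1/2)" using assms pi_less_4 by (intro mult_mono) auto
  then have y1: "y \<le> 2" by (simp add: y_def)
  have "\<bar>sin y - y\<bar> \<le> inverse 6 * \<bar>y\<bar>^3"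
    using Maclaurin_sin_bound[of y 3] by (simp add: sin_coeff_def numeral_3_eq_3 fact_numeral)
  then have "\<bar>sin y - y\<bar> \<le> y^3/6" using y0 by simp
  then have "y - sin y \<le> y^3/6" using abs_ge_minus_self[of "sin y - y"] by linarith
  then have "sin y \<ge> y - y^3/6" by linarith
  moreover have "y^3 \<le> 4 * y"
  proof -
    have "y^2 \<le> 2^2" using y0 y1 by (intro power_mono) auto
    then have "y * y^2 \<le> y * 4" using y0 by (intro mult_left_mono) auto
    then show ?thesis by (simp add: power3_eq_cube power2_eq_square mult.commute)
  qed
  ultimately have "sin y \<ge> y/3" by linarith
  moreover have "3 * \<bar>x\<bar> \<le> pi * \<bar>x\<bar>" using pi_gt3 by (intro mult_right_mono) auto
  then have "\<bar>x\<bar> \<le> y/3" unfolding y_def by simp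
  moreover have "\<bar>sin (pi*x)\<bar> = \<bar>sin y\<bar>"
    unfolding y_def by (cases "x \<ge> 0") (auto simp: abs_mult)
  ultimately show ?thesis by linarith
qed

lemma ee_round:
  "exp (\<i> * of_real (2*pi*x)) = exp (\<i> * of_real (2*pi*(x - of_int (round x))))"
proof -
  have "exp (\<i> * of_real (2*pi*x)) = exp (\<i> * of_real (2*pi*(x - of_int (round x))) + \<i> * (of_int (round x) * (of_real pi * 2)))"
    by (simp add: algebra_simps)
  then show ?thesis by (simp only: exp_plus_2pin)
qed

lemma ee_lower:
  "\<bar>x - of_int (round x)\<bar> \<le> norm (1 - exp (\<i> * of_real (2*pi*x)))"
proof -
  have "\<bar>x - of_int (round x)\<bar> \<le> 1/2" using of_int_round_abs_le[of x] by linarith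
  from sin_lower[OF this] show ?thesis unfolding ee_round[of x] norm_one_minus_ee by linarith
qed



lemma int_interval_reindex:
  fixes M :: int assumes "0 \<le> M"
  shows "(\<Sum>r\<in>{-M..M}. F r) = (\<Sum>k\<le>nat (2*M). F (int k - M))"
  by (rule sum.reindex_bij_witness[where i="\<lambda>k. int k - M" and j="\<lambda>r. nat (r+M)"]) (use assms in auto)

lemma inner_decay:
  fixes M s :: int and L x :: real and j :: nat
  assumes M0: "0 \<le> M" and bnd: "\<And>r. r \<in> {-M..M} \<Longrightarrow> \<bar>real_of_int (s + r)\<bar> \<le> L"
  shows "norm (\<Sum>r\<in>{-M..M}. of_real (real_of_int (s + r) ^ j) * exp (\<i> * of_real (2*pi*real_of_int (s+r)) * of_real x))
          * norm (1 - exp (\<i> * of_real (2*pi*x))) \<le> 2 * (1 + 2 * real j) * L^j"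
proof -
  define N where "N = nat (2*M)"
  define z where "z = exp (\<i> * of_real (2*pi*x))"
  define E0 where "E0 = exp (\<i> * of_real (2*pi*real_of_int (s - M)) * of_real x)"
  define g where "g k = real_of_int (s - M + int k) ^ j" for k
  define u where "u k = E0 * z ^ k" for k
  have L0: "0 \<le> L" using bnd[of M] M0 by force
  have nz: "norm z = 1" unfolding z_def by (simp only: norm_exp_i_times)
  have nE0: "norm E0 = 1" unfolding E0_def
    by (metis mult.assoc norm_exp_i_times of_real_mult)
  have eq: "(\<Sum>r\<in>{-M..M}. of_real (real_of_int (s + r) ^ j) * exp (\<i> * of_real (2*pi*real_of_int (s+r)) * of_real x))
     = (\<Sum>k\<le>N. of_real (g k) * u k)"
    unfolding int_interval_reindex[OF M0] N_def
  proof (rule sum.cong[OF refl])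
    fix k assume "k \<in> {..nat (2*M)}"
    have "exp (\<i> * of_real (2*pi*real_of_int (s + (int k - M))) * of_real x)
        = exp (\<i> * of_real (2*pi*real_of_int (s - M)) * of_real x + of_nat k * (\<i> * of_real (2*pi*x)))"
      by (simp add: algebra_simps)
    also have "\<dots> = u k" unfolding u_def E0_def z_def exp_add exp_of_nat_mult ..
    finally show "of_real (real_of_int (s + (int k - M)) ^ j) * exp (\<i> * of_real (2*pi*real_of_int (s + (int k - M))) * of_real x)
        = of_real (g k) * u k" unfolding g_def by (simp add: algebra_simps)
  qed
  have gb: "\<bar>real_of_int (s - M + int k)\<bar> \<le> L" if "k \<le> N" for k
    using bnd[of "int k - M"] that M0 unfolding N_def by (auto simp: algebra_simps)
  have TV: "\<bar>g N\<bar> + (\<Sum>k<N. \<bar>g (Suc k) - g k\<bar>) \<le> (1 + 2 * real j) * L^j"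
  proof -
    have "\<bar>g N\<bar> \<le> L^j" unfolding g_def power_abs by (rule power_mono[OF gb]) auto
    moreover have "(\<Sum>k<N. \<bar>g (Suc k) - g k\<bar>) \<le> (\<Sum>k<N. real j * L^(j-1) * 1)"
    proof (rule sum_mono)
      fix k assume "k \<in> {..<N}"
      then have "Suc k \<le> N" "k \<le> N" by auto
      from power_diff_bound[OF gb[OF this(1)] gb[OF this(2)], of j]
      show "\<bar>g (Suc k) - g k\<bar> \<le> real j * L^(j-1) * 1" unfolding g_def by simp
    qed
    moreover have "(\<Sum>k<N. real j * L^(j-1) * 1) \<le> 2 * real j * L^j"
    proof (cases j)
      case 0 then show ?thesis by simp
    next
      case (Suc j')
      have "real N \<le> 2 * L"
        using bnd[of M] bnd[of "-M"] M0 unfolding N_def by auto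
      then have "real N * L^j' \<le> 2 * L * L^j'" by (intro mult_right_mono) (use L0 in auto)
      then have "real j * (real N * L^j') \<le> real j * (2 * L * L^j')" by (rule mult_left_mono) auto
      then show ?thesis using Suc by (simp add: algebra_simps)
    qed
    ultimately show ?thesis by (simp add: algebra_simps)
  qed
  show ?thesis
  proof (cases "z = 1")
    case True show ?thesis unfolding z_def[symmetric] using True L0 by simp
  next
    case False
    then have nzp: "0 < norm (1 - z)" by simp
    have U: "norm (\<Sum>i\<le>r. u i) \<le> 2 / norm (1 - z)" for r
    proof -
      have "norm (\<Sum>i\<le>r. u i) = norm (\<Sum>i\<le>r. z^i)"
        unfolding u_def sum_distrib_left[symmetric] norm_mult nE0 by simp
      with geom_bound[OF nz, of r] nzp show ?thesis by (simp add: field_simps)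
    qed
    have "norm (\<Sum>k\<le>N. of_real (g k) * u k) \<le> 2 / norm (1 - z) * ((1 + 2 * real j) * L^j)"
      by (rule order_trans[OF abel_bound[OF U]], rule mult_left_mono[OF TV]) (use nzp in auto)
    then show ?thesis unfolding eq z_def[symmetric] using nzp by (simp add: field_simps)
  qed
qed



lemma tp_mult:
  "tp c1 w1 S1 x * tp c2 w2 S2 x = tp (\<lambda>(p,q). c1 p * c2 q) (\<lambda>(p,q). w1 p + w2 q) (S1 \<times> S2) x"
  unfolding tp_def sum_product sum.cartesian_product
  by (rule sum.cong[OF refl]) (auto simp: algebra_simps exp_add[symmetric])

lemma dirichlet_tp: "dirichlet mt = tp (\<lambda>_. 1 / of_int (2*mt+1)) real_of_int {-mt..mt}"
  unfolding dirichlet_def tp_def[abs_def] by (rule ext) (simp add: sum_distrib_left algebra_simps)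

definition K3 :: "int \<Rightarrow> int \<Rightarrow> int \<Rightarrow> real \<Rightarrow> complex" where
  "K3 a b c x = dirichlet a x * dirichlet b x * dirichlet c x"

definition W3 :: "(int \<times> int) \<times> int \<Rightarrow> real" where
  "W3 = (\<lambda>((p,q),r). real_of_int (p + q + r))"

definition c3 :: "int \<Rightarrow> int \<Rightarrow> int \<Rightarrow> complex" where
  "c3 a b c = 1 / (of_int (2*a+1) * of_int (2*b+1) * of_int (2*c+1))"

lemma K3_tp: "K3 a b c = tp (\<lambda>_. c3 a b c) W3 (({-a..a} \<times> {-b..b}) \<times> {-c..c})"
proof (rule ext)
  fix x
  show "K3 a b c x = tp (\<lambda>_. c3 a b c) W3 (({-a..a} \<times> {-b..b}) \<times> {-c..c}) x"
    unfolding K3_def dirichlet_tp tp_mult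
    unfolding tp_def W3_def c3_def
    by (rule sum.cong[OF refl]) auto
qed

lemma hd_K3:
  "higher_deriv j (K3 a b c) x = (\<Sum>pq\<in>{-a..a} \<times> {-b..b}. \<Sum>r\<in>{-c..c}.
      c3 a b c * (\<i> * of_real (2*pi*real_of_int (fst pq + snd pq + r)))^j *
      exp (\<i> * of_real (2*pi*real_of_int (fst pq + snd pq + r)) * of_real x))"
  unfolding K3_tp higher_deriv_tp tp_def sum.cartesian_product W3_def
  by (rule sum.cong[OF refl]) auto



lemma int_sym_insert:
  "{- int (Suc k)..int (Suc k)} = insert (int (Suc k)) (insert (- int (Suc k)) {- int k..int k})"
  by auto

lemma sum_id_sym: "(\<Sum>r\<in>{-M..M}. real_of_int r) = 0"
proof -
  have "(\<Sum>r\<in>{-M..M}. real_of_int r) = (\<Sum>r\<in>{-M..M}. real_of_int (-r))"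
    by (rule sum.reindex_bij_witness[where i=uminus and j=uminus]) auto
  then show ?thesis by (simp add: sum_negf)
qed

lemma sum_sq_sym: "(\<Sum>r\<in>{- int k..int k}. (real_of_int r)^2) = real k * (real k + 1) * (2 * real k + 1) / 3"
proof (induction k)
  case 0 then show ?case by simp
next
  case (Suc k)
  have "int (Suc k) \<notin> {- int k..int k}" "- int (Suc k) \<notin> insert (int (Suc k)) {- int k..int k}" by auto
  then show ?case unfolding int_sym_insert using Suc
    by (subst sum.insert) (auto simp: field_simps power2_eq_square)
qed

lemma sum_shift_sq_ge:
  assumes "0 \<le> M"
  shows "(\<Sum>r\<in>{-M..M}. (real_of_int r)^2) \<le> (\<Sum>r\<in>{-M..M}. (real_of_int (s + r))^2)"
proof -
  have "(\<Sum>r\<in>{-M..M}. (real_of_int (s + r))^2) =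
     (\<Sum>r\<in>{-M..M}. (real_of_int r)^2) + 2 * real_of_int s * (\<Sum>r\<in>{-M..M}. real_of_int r)
       + (\<Sum>r\<in>{-M..M}. (real_of_int s)^2)"
    by (simp add: sum.distrib sum_distrib_left power2_eq_square algebra_simps)
  then show ?thesis unfolding sum_id_sym by (simp add: sum_nonneg)
qed

lemma sum_sq_sym_int:
  assumes "0 \<le> M"
  shows "(\<Sum>r\<in>{-M..M}. (real_of_int r)^2) = real_of_int M * (real_of_int M + 1) * (2 * real_of_int M + 1) / 3"
  using sum_sq_sym[of "nat M"] assms by simp



lemma c3_real: "c3 a b c = of_real (1 / (real_of_int (2*a+1) * real_of_int (2*b+1) * real_of_int (2*c+1)))"
  unfolding c3_def by simp

lemma norm_c3: assumes "0 \<le> a" "0 \<le> b" "0 \<le> c"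
  shows "norm (c3 a b c) = 1 / (real_of_int (2*a+1) * real_of_int (2*b+1) * real_of_int (2*c+1))"
  unfolding c3_real norm_of_real using assms by simp

lemma norm_term: "norm (C * (\<i> * of_real u)^j * exp (\<i> * of_real u * of_real x)) = norm C * \<bar>u\<bar>^j"
proof -
  have "exp (\<i> * of_real u * of_real x) = exp (\<i> * of_real (u*x))" by (simp add: mult.assoc)
  then show ?thesis by (simp only: norm_mult norm_power norm_of_real norm_ii norm_exp_i_times) simp
qed

lemma card_sym: "0 \<le> a \<Longrightarrow> real (card {-a..a}) = real_of_int (2*a+1)"
  by simp

lemma hd_K3_trivial:
  assumes a: "0 \<le> a" and b: "0 \<le> b" and c: "0 \<le> c"
  shows "norm (higher_deriv j (K3 a b c) x) \<le> (2*pi*real_of_int (a+b+c))^j"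
proof -
  let ?m = "real_of_int (a+b+c)"
  have "norm (higher_deriv j (K3 a b c) x) \<le> (\<Sum>pq\<in>{-a..a} \<times> {-b..b}. \<Sum>r\<in>{-c..c}. norm (c3 a b c) * (2*pi*?m)^j)"
    unfolding hd_K3
  proof (rule order_trans[OF norm_sum], rule sum_mono, rule order_trans[OF norm_sum], rule sum_mono)
    fix pq r assume pq: "pq \<in> {-a..a} \<times> {-b..b}" and r: "r \<in> {-c..c}"
    have "\<bar>real_of_int (fst pq + snd pq + r)\<bar> \<le> ?m" using pq r by (cases pq) auto
    then have "(2*pi*\<bar>real_of_int (fst pq + snd pq + r)\<bar>)^j \<le> (2*pi*?m)^j"
      by (intro power_mono mult_left_mono) auto
    then show "norm (c3 a b c * (\<i> * of_real (2*pi*real_of_int (fst pq + snd pq + r)))^j *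
      exp (\<i> * of_real (2*pi*real_of_int (fst pq + snd pq + r)) * of_real x)) \<le> norm (c3 a b c) * (2*pi*?m)^j"
      unfolding norm_term by (simp add: abs_mult mult_left_mono)
  qed
  also have "\<dots> = (2*pi*?m)^j"
    using a b c by (simp add: norm_c3 card_cartesian_product)
  finally show ?thesis .
qed



lemma pw_split: "(\<i> * of_real (2*pi*u))^j = \<i>^j * of_real ((2*pi)^j) * of_real (u^j)"
  by (simp only: power_mult_distrib of_real_mult of_real_power mult.assoc)

lemma pw2_term: "C * (\<i> * of_real (2*pi*u))^2 * exp (\<i> * of_real (2*pi*u) * of_real 0) = - C * of_real (4*pi^2*u^2)"
  by (simp add: power_mult_distrib power2_eq_square)

lemma hd_K3_decay:
  assumes a: "0 \<le> a" and b: "0 \<le> b" and c: "0 \<le> c"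
  shows "norm (higher_deriv j (K3 a b c) x) * norm (1 - exp (\<i> * of_real (2*pi*x)))
     \<le> 2 * (1 + 2 * real j) * (2*pi*real_of_int (a+b+c))^j / real_of_int (2*c+1)"
proof -
  let ?m = "real_of_int (a+b+c)"
  let ?N1 = "norm (1 - exp (\<i> * of_real (2*pi*x)))"
  define Inner where "Inner s = (\<Sum>r\<in>{-c..c}. of_real (real_of_int (s + r) ^ j) *
       exp (\<i> * of_real (2*pi*real_of_int (s+r)) * of_real x))" for s
  have rep: "higher_deriv j (K3 a b c) x = (\<Sum>pq\<in>{-a..a} \<times> {-b..b}.
      c3 a b c * (\<i>^j * of_real ((2*pi)^j)) * Inner (fst pq + snd pq))"
    unfolding hd_K3 Inner_def sum_distrib_left
    by (intro sum.cong refl) (unfold pw_split, simp only: mult.assoc)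
  have "norm (higher_deriv j (K3 a b c) x) * ?N1 \<le>
      (\<Sum>pq\<in>{-a..a} \<times> {-b..b}. norm (c3 a b c * (\<i>^j * of_real ((2*pi)^j)) * Inner (fst pq + snd pq))) * ?N1"
    unfolding rep by (rule mult_right_mono[OF norm_sum]) simp
  also have "\<dots> = (\<Sum>pq\<in>{-a..a} \<times> {-b..b}. norm (c3 a b c) * (2*pi)^j * (norm (Inner (fst pq + snd pq)) * ?N1))"
    unfolding sum_distrib_right by (rule sum.cong[OF refl]) (simp add: norm_mult norm_power)
  also have "\<dots> \<le> (\<Sum>pq\<in>{-a..a} \<times> {-b..b}. norm (c3 a b c) * (2*pi)^j * (2 * (1 + 2 * real j) * ?m^j))"
  proof (rule sum_mono, rule mult_left_mono)
    fix pq assume pq: "pq \<in> {-a..a} \<times> {-b..b}"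
    show "norm (Inner (fst pq + snd pq)) * ?N1 \<le> 2 * (1 + 2 * real j) * ?m^j"
      unfolding Inner_def
      by (rule inner_decay[OF c]) (use pq in \<open>cases pq, auto\<close>)
  qed simp
  also have "\<dots> = real (card ({-a..a} \<times> {-b..b})) * (norm (c3 a b c) * (2*pi)^j * (2 * (1 + 2 * real j) * ?m^j))"
    by simp
  also have "\<dots> = 2 * (1 + 2 * real j) * (2*pi*?m)^j / real_of_int (2*c+1)"
  proof -
    have cardAB: "real (card ({-a..a} \<times> {-b..b})) = real_of_int (2*a+1) * real_of_int (2*b+1)"
      using a b by (simp add: card_cartesian_product)
    have aux: "A * B * (1 / (A * B * C) * X * (K * Y)) = K * (X * Y) / C" if "A > 0" "B > 0" for A B C X K Y :: real
      using that by (simp add: field_simps)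
    show ?thesis unfolding cardAB norm_c3[OF a b c] power_mult_distrib
      by (rule aux) (use a b in auto)
  qed
  finally show ?thesis .
qed

lemma hd2_K3_lower:
  assumes a: "0 \<le> a" and b: "0 \<le> b" and c: "0 \<le> c"
  shows "(real_of_int c)^2 \<le> norm (higher_deriv 2 (K3 a b c) 0)"
proof -
  let ?c3 = "1 / (real_of_int (2*a+1) * real_of_int (2*b+1) * real_of_int (2*c+1))"
  define Q where "Q = (\<Sum>pq\<in>{-a..a} \<times> {-b..b}. \<Sum>r\<in>{-c..c}. (real_of_int (fst pq + snd pq + r))^2)"
  have "higher_deriv 2 (K3 a b c) 0 = (\<Sum>pq\<in>{-a..a} \<times> {-b..b}. \<Sum>r\<in>{-c..c}.
       of_real (- (4 * pi^2 * ?c3 * (real_of_int (fst pq + snd pq + r))^2)))"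
    unfolding hd_K3 pw2_term c3_real by (simp only: of_real_mult of_real_minus mult_minus_left mult_minus_right mult_ac)
  also have "\<dots> = - of_real (4 * pi^2 * ?c3 * Q)"
    unfolding Q_def of_real_sum[symmetric] sum_negf sum_distrib_left by simp
  finally have hd2: "higher_deriv 2 (K3 a b c) 0 = - of_real (4 * pi^2 * ?c3 * Q)" .
  have Q0: "0 \<le> Q" unfolding Q_def by (intro sum_nonneg) auto
  have "0 \<le> 4 * pi^2 * ?c3 * Q" using a b c Q0 by simp
  then have eq: "norm (higher_deriv 2 (K3 a b c) 0) = 4 * pi^2 * ?c3 * Q"
    unfolding hd2 norm_minus_cancel norm_of_real by (rule abs_of_nonneg)
  have "(\<Sum>pq\<in>{-a..a} \<times> {-b..b}. \<Sum>r\<in>{-c..c}. (real_of_int r)^2) \<le> Q"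
    unfolding Q_def
    by (rule sum_mono) (use sum_shift_sq_ge[OF c, of "fst _ + snd _"] in \<open>simp add: add.assoc\<close>)
  then have "real_of_int (2*a+1) * real_of_int (2*b+1) * (real_of_int c * (real_of_int c + 1) * (2 * real_of_int c + 1) / 3) \<le> Q"
    using a b c by (simp add: sum_sq_sym_int card_cartesian_product)
  then have "4 * pi^2 * ?c3 * (real_of_int (2*a+1) * real_of_int (2*b+1) * (real_of_int c * (real_of_int c + 1) * (2 * real_of_int c + 1) / 3))
     \<le> 4 * pi^2 * ?c3 * Q"
    using a b c by (intro mult_left_mono) auto
  moreover have "4 * pi^2 * ?c3 * (real_of_int (2*a+1) * real_of_int (2*b+1) * (real_of_int c * (real_of_int c + 1) * (2 * real_of_int c + 1) / 3))
     = 4 * pi^2 * (real_of_int c * (real_of_int c + 1)) / 3"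
  proof -
    have aux2: "4 * p * (1 / (A * B * C)) * (A * B * (y * (y + 1) * (2 * y + 1) / 3)) = 4 * p * (y * (y + 1)) / 3"
      if "A > 0" "B > 0" "C = 2 * y + 1" "y \<ge> 0" for A B C y p :: real
    proof -
      have "C > 0" using that by auto
      then show ?thesis using that(1,2) unfolding that(3)[symmetric] by (simp add: field_simps)
    qed
    show ?thesis by (rule aux2) (use a b c in auto)
  qed
  moreover have "(real_of_int c)^2 \<le> 4 * pi^2 * (real_of_int c * (real_of_int c + 1)) / 3"
  proof -
    have "1*1 \<le> pi*pi" using pi_gt3 by (intro mult_mono) auto
    then have "3 \<le> 4*pi^2" by (simp add: power2_eq_square)
    then have "(real_of_int c)^2 * 3 \<le> (real_of_int c)^2 * (4*pi^2)" by (intro mult_left_mono) auto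
    then have "(real_of_int c)^2 * 3 \<le> 4 * pi^2 * (real_of_int c * real_of_int c)"
      by (simp add: power2_eq_square algebra_simps)
    also have "\<dots> \<le> 4 * pi^2 * (real_of_int c * (real_of_int c + 1))"
      using c by (intro mult_left_mono) auto
    finally show ?thesis by simp
  qed
  ultimately show ?thesis unfolding eq by linarith
qed



lemma sum_inv_sq_sym: "(\<Sum>k\<in>{- int N..int N}. 1 / (1 + (real_of_int k)^2)) \<le> 5 - 4 / (real N + 1)"
proof (induction N)
  case 0 then show ?case by simp
next
  case (Suc N)
  have set: "{- int (Suc N)..int (Suc N)} = insert (int (Suc N)) (insert (- int (Suc N)) {- int N..int N})" by auto
  have nm: "int (Suc N) \<notin> {- int N..int N}" "- int (Suc N) \<notin> insert (int (Suc N)) {- int N..int N}" by auto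
  have eq: "(\<Sum>k\<in>{- int (Suc N)..int (Suc N)}. 1 / (1 + (real_of_int k)^2)) =
      2 / (1 + (real N + 1)^2) + (\<Sum>k\<in>{- int N..int N}. 1 / (1 + (real_of_int k)^2))"
  proof -
    have sq: "(-1 - real N)^2 = (1 + real N)^2" by (simp add: power2_eq_square algebra_simps)
    show ?thesis unfolding set using nm by (simp add: sum.insert sq add.commute)
  qed
  have step: "2 / (1 + (real N + 1)^2) \<le> 4 / (real N + 1) - 4 / (real N + 2)"
  proof -
    have "4 / (real N + 1) - 4 / (real N + 2) = 4 / ((real N + 1) * (real N + 2))"
      by (simp add: field_simps)
    moreover have "2 / (1 + (real N + 1)^2) \<le> 4 / ((real N + 1) * (real N + 2))"
    proof -
      have p1: "0 < 1 + (real N + 1)^2" by (simp add: add_pos_nonneg)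
      have p2: "0 < (real N + 1) * (real N + 2)" by simp
      have "2 * ((real N + 1) * (real N + 2)) \<le> 4 * (1 + (real N + 1)^2)" by (simp add: power2_eq_square algebra_simps)
      then show ?thesis unfolding pos_divide_le_eq[OF p1] times_divide_eq_left pos_le_divide_eq[OF p2] by simp
    qed
    ultimately show ?thesis by simp
  qed
  have r: "real (Suc N) + 1 = real N + 2" by simp
  show ?case unfolding eq r using Suc.IH step by linarith
qed

lemma finite_int_bounded: "finite (K :: int set) \<Longrightarrow> \<exists>N::nat. K \<subseteq> {- int N..int N}"
proof (induction K rule: finite_induct)
  case empty then show ?case by auto
next
  case (insert x K)
  then obtain N where "K \<subseteq> {- int N..int N}" by auto
  then have "\<forall>y\<in>K. - int N \<le> y \<and> y \<le> int N" by auto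
  then show ?case using abs_ge_zero[of x] abs_ge_self[of x] abs_ge_minus_self[of x]
    by (intro exI[of _ "N + nat \<bar>x\<bar>"]) force
qed

lemma sum_inv_sq_le5:
  assumes "finite (K :: int set)"
  shows "(\<Sum>k\<in>K. 1 / (1 + (real_of_int k)^2)) \<le> 5"
proof -
  obtain N where N: "K \<subseteq> {- int N..int N}" using finite_int_bounded[OF assms] by auto
  have "(\<Sum>k\<in>K. 1 / (1 + (real_of_int k)^2)) \<le> (\<Sum>k\<in>{- int N..int N}. 1 / (1 + (real_of_int k)^2))"
    by (rule sum_mono2[OF _ N]) auto
  also have "\<dots> \<le> 5" using sum_inv_sq_sym[of N] by (smt (verit) divide_nonneg_nonneg of_nat_0_le_iff)
  finally show ?thesis .
qed

lemma sep_sum: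
  fixes T :: "'a set" and x :: "'a \<Rightarrow> real" and h :: "'a \<Rightarrow> real"
  assumes fin: "finite T" and d: "\<delta> > 0"
    and sep: "\<And>t t'. t \<in> T \<Longrightarrow> t' \<in> T \<Longrightarrow> t \<noteq> t' \<Longrightarrow> \<delta> \<le> \<bar>x t - x t'\<bar>"
    and hb: "\<And>t (k::int). t \<in> T \<Longrightarrow> (\<bar>real_of_int k\<bar> - 1) * \<delta> \<le> \<bar>x t\<bar> \<Longrightarrow> h t \<le> B / (1 + (real_of_int k)^2)"
    and B: "0 \<le> B"
  shows "(\<Sum>t\<in>T. h t) \<le> 5 * B"
proof -
  define k where "k t = \<lfloor>x t / \<delta>\<rfloor>" for t
  have inj: "inj_on k T"
  proof (rule inj_onI, rule ccontr)
    fix t t' assume tT: "t \<in> T" "t' \<in> T" and eq: "k t = k t'" and ne: "t \<noteq> t'"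
    have a1: "real_of_int (k t) \<le> x t / \<delta>" "x t / \<delta> < real_of_int (k t) + 1"
      "real_of_int (k t') \<le> x t' / \<delta>" "x t' / \<delta> < real_of_int (k t') + 1" unfolding k_def by linarith+
    have "x t / \<delta> - x t' / \<delta> < 1" "x t' / \<delta> - x t / \<delta> < 1" using a1 eq by linarith+
    then have "x t - x t' < \<delta>" "x t' - x t < \<delta>" using d by (simp_all add: field_simps)
    then have "\<bar>x t - x t'\<bar> < \<delta>" by linarith
    with sep[OF tT ne] show False by simp
  qed
  have low: "(\<bar>real_of_int (k t)\<bar> - 1) * \<delta> \<le> \<bar>x t\<bar>" for t
  proof -
    have f1: "real_of_int (k t) \<le> x t / \<delta>" "x t / \<delta> < real_of_int (k t) + 1" unfolding k_def by linarith+
    then have "real_of_int (k t) * \<delta> \<le> x t" "x t < (real_of_int (k t) + 1) * \<delta>" using d by (simp_all add: field_simps)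
    then show ?thesis using d by (cases "k t \<ge> 0") (auto simp: algebra_simps)
  qed
  have "(\<Sum>t\<in>T. h t) \<le> (\<Sum>t\<in>T. B / (1 + (real_of_int (k t))^2))"
    by (rule sum_mono, rule hb[OF _ low])
  also have "\<dots> = (\<Sum>kk\<in>k ` T. B / (1 + (real_of_int kk)^2))"
    by (rule sum.reindex[OF inj, symmetric, unfolded comp_def])
  also have "\<dots> = B * (\<Sum>kk\<in>k ` T. 1 / (1 + (real_of_int kk)^2))"
    by (simp add: sum_distrib_left)
  also have "\<dots> \<le> B * 5" by (rule mult_left_mono[OF sum_inv_sq_le5 B]) (use fin in auto)
  finally show ?thesis by simp
qed



lemma round_min: fixes u :: real shows "\<bar>u - of_int (round u)\<bar> \<le> \<bar>u - of_int k\<bar>"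
proof (cases "k = round u")
  case True then show ?thesis by simp
next
  case False
  then have "k - round u \<noteq> 0" by simp
  then have "(1::int) \<le> \<bar>k - round u\<bar>" by linarith
  then have "1 \<le> \<bar>real_of_int k - of_int (round u)\<bar>"
    by (metis of_int_1_le_iff of_int_abs of_int_diff)
  moreover have "\<bar>u - of_int (round u)\<bar> \<le> 1/2" using of_int_round_abs_le[of u] by (simp add: abs_minus_commute)
  ultimately show ?thesis by linarith
qed

lemma q_bound:
  fixes q R0 k :: real
  assumes "0 \<le> q" "q \<le> R0" "q * (\<bar>k\<bar> - 1) \<le> 54 * R0"
  shows "q^2 * (1 + k^2) \<le> 5 * (108 * R0)^2"
proof (cases "\<bar>k\<bar> \<le> 2")
  case True
  have "k^2 \<le> 2^2" using True by (metis abs_ge_zero power2_abs power_mono)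
  then have A: "q^2 * (1 + k^2) \<le> q^2 * 5" using assms by (intro mult_left_mono) auto
  have "q^2 \<le> R0^2" using assms by (intro power_mono) auto
  moreover have e: "(108*R0)^2 = 11664 * R0^2" by (simp add: power_mult_distrib)
  ultimately show ?thesis using A zero_le_power2[of R0] unfolding e by linarith
next
  case False
  then have "2 < \<bar>k\<bar>" by simp
  then have "\<bar>k\<bar> \<le> 2 * (\<bar>k\<bar> - 1)" by simp
  then have "q * \<bar>k\<bar> \<le> q * (2 * (\<bar>k\<bar> - 1))" using assms by (intro mult_left_mono) auto
  also have "\<dots> \<le> 108 * R0" using assms by linarith
  finally have "(q * \<bar>k\<bar>)^2 \<le> (108 * R0)^2" using assms by (intro power_mono) auto
  then have a: "q^2 * k^2 \<le> (108 * R0)^2" by (simp add: power_mult_distrib)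
  have "q^2 \<le> R0^2" using assms by (intro power_mono) auto
  moreover have e: "(108*R0)^2 = 11664 * R0^2" by (simp add: power_mult_distrib)
  ultimately have "q^2 \<le> (108 * R0)^2" using zero_le_power2[of R0] unfolding e by linarith
  with a have "q^2 * (1 + k^2) \<le> 2 * (108 * R0)^2" by (simp add: algebra_simps)
  then show ?thesis using zero_le_power2[of "108*R0"] by linarith
qed

lemma kappa_le:
  fixes X c :: real
  assumes "0 < c" "c^2 \<le> X"
  shows "X powr (-1/2) \<le> 1 / c"
proof -
  have X0: "0 < X" using assms by (metis power2_less_0 not_le order_less_le_trans zero_less_power)
  have "(X powr (-1/2))^2 = X powr (-1/2 + -1/2)" by (simp only: power2_eq_square powr_add)
  also have "\<dots> = X powr (-1)" by simp
  also have "\<dots> = 1 / X" using X0 by (rule powr_neg_one)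
  also have "\<dots> \<le> 1 / c^2" using assms X0 by (intro divide_left_mono) auto
  also have "\<dots> = (1/c)^2" by (simp add: power_divide)
  finally show ?thesis by (rule power2_le_imp_le) (use assms in auto)
qed

lemma per_j:
  fixes a b c :: int and \<kappa> y :: real and j :: nat
  assumes a: "0 \<le> a" and b: "0 \<le> b" and c: "1 \<le> c"
    and m3: "real_of_int (a+b+c) \<le> 3 * real_of_int c"
    and k0: "0 \<le> \<kappa>" and k1: "\<kappa> \<le> 1 / real_of_int c" and j: "j \<le> 4"
  shows "\<kappa>^j * norm (higher_deriv j (K3 a b c) y) \<le> (6*pi)^4"
    and "\<kappa>^j * norm (higher_deriv j (K3 a b c) y) * norm (1 - exp (\<i> * of_real (2*pi*y))) * real_of_int c \<le> 18 * (6*pi)^4"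
proof -
  let ?m = "real_of_int (a+b+c)"
  have c0: "0 \<le> c" using c by simp
  have cpos: "0 < real_of_int c" using c by simp
  have m0: "0 \<le> ?m" using a b c by simp
  have "\<kappa>^j * (2*pi*?m)^j = (\<kappa> * (2*pi*?m))^j" by (simp add: power_mult_distrib)
  also have "\<dots> \<le> (6*pi)^j"
  proof (rule power_mono)
    have "\<kappa> * (2*pi*?m) \<le> (1 / real_of_int c) * (2*pi*(3 * real_of_int c))"
      using k0 k1 m3 m0 by (intro mult_mono) auto
    also have "\<dots> = 6*pi" using cpos by simp
    finally show "\<kappa> * (2*pi*?m) \<le> 6*pi" .
  qed (use k0 m0 in auto)
  also have "\<dots> \<le> (6*pi)^4" using j pi_gt3 by (intro power_increasing) auto
  finally have key: "\<kappa>^j * (2*pi*?m)^j \<le> (6*pi)^4" .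
  show "\<kappa>^j * norm (higher_deriv j (K3 a b c) y) \<le> (6*pi)^4"
    using mult_left_mono[OF hd_K3_trivial[OF a b c0, of j y], of "\<kappa>^j"] key k0 by auto
  have "\<kappa>^j * norm (higher_deriv j (K3 a b c) y) * norm (1 - exp (\<i> * of_real (2*pi*y)))
      \<le> \<kappa>^j * (2 * (1 + 2 * real j) * (2*pi*?m)^j / real_of_int (2*c+1))"
    using mult_left_mono[OF hd_K3_decay[OF a b c0, of j y], of "\<kappa>^j"] k0 by (simp add: mult.assoc)
  also have "\<dots> = 2 * (1 + 2 * real j) * (\<kappa>^j * (2*pi*?m)^j) / real_of_int (2*c+1)" by simp
  also have "\<dots> \<le> 18 * (6*pi)^4 / real_of_int (2*c+1)"
  proof (rule divide_right_mono)
    have "2 * (1 + 2 * real j) \<le> 18" using j by simp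
    then show "2 * (1 + 2 * real j) * (\<kappa>^j * (2*pi*?m)^j) \<le> 18 * (6*pi)^4"
      using key k0 m0 by (intro mult_mono) auto
  qed (use c in simp)
  finally have "\<kappa>^j * norm (higher_deriv j (K3 a b c) y) * norm (1 - exp (\<i> * of_real (2*pi*y))) * real_of_int c
      \<le> 18 * (6*pi)^4 / real_of_int (2*c+1) * real_of_int c" using cpos by (intro mult_right_mono) auto
  also have "\<dots> \<le> 18 * (6*pi)^4"
  proof -
    have "real_of_int c / real_of_int (2*c+1) \<le> 1" using c by simp
    then have "18 * (6*pi)^4 * (real_of_int c / real_of_int (2*c+1)) \<le> 18 * (6*pi)^4 * 1"
      by (intro mult_left_mono) auto
    then show ?thesis by simp
  qed
  finally show "\<kappa>^j * norm (higher_deriv j (K3 a b c) y) * norm (1 - exp (\<i> * of_real (2*pi*y))) * real_of_int c \<le> 18 * (6*pi)^4" .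
qed



lemma per_point:
  fixes a b c k :: int and \<kappa> y \<delta> :: real and j :: nat
  assumes a: "0 \<le> a" and b: "0 \<le> b" and c: "1 \<le> c"
    and m3: "real_of_int (a+b+c) \<le> 3 * real_of_int c"
    and k0: "0 \<le> \<kappa>" and k1: "\<kappa> \<le> 1 / real_of_int c" and j: "j \<le> 4"
    and d: "0 < \<delta>" and cd: "1/3 \<le> real_of_int c * \<delta>"
    and kk: "(\<bar>real_of_int k\<bar> - 1) * \<delta> \<le> \<bar>y - of_int (round y)\<bar>"
  shows "(\<kappa>^j * norm (higher_deriv j (K3 a b c) y))^2 \<le> 5 * (108 * (6*pi)^4)^2 / (1 + (real_of_int k)^2)"
proof -
  define q where "q = \<kappa>^j * norm (higher_deriv j (K3 a b c) y)"
  define N1 where "N1 = norm (1 - exp (\<i> * of_real (2*pi*y)))"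
  have q0: "0 \<le> q" unfolding q_def using k0 by simp
  have qR: "q \<le> (6*pi)^4" unfolding q_def by (rule per_j(1)[OF a b c m3 k0 k1 j])
  have qN: "q * N1 * real_of_int c \<le> 18 * (6*pi)^4" unfolding q_def N1_def by (rule per_j(2)[OF a b c m3 k0 k1 j])
  have N1: "\<bar>y - of_int (round y)\<bar> \<le> N1" unfolding N1_def by (rule ee_lower)
  have "q * (\<bar>real_of_int k\<bar> - 1) \<le> 54 * (6*pi)^4"
  proof (cases "\<bar>real_of_int k\<bar> - 1 \<le> 0")
    case True
    then have "q * (\<bar>real_of_int k\<bar> - 1) \<le> 0" using q0 by (simp add: mult_nonneg_nonpos)
    then show ?thesis by (smt (verit) zero_le_power pi_gt_zero)
  next
    case False
    have "(\<bar>real_of_int k\<bar> - 1) * (1/3) \<le> (\<bar>real_of_int k\<bar> - 1) * (real_of_int c * \<delta>)"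
      using False cd by (intro mult_left_mono) auto
    also have "\<dots> = real_of_int c * ((\<bar>real_of_int k\<bar> - 1) * \<delta>)" by simp
    also have "\<dots> \<le> real_of_int c * N1" using kk N1 c by (intro mult_left_mono) auto
    finally have "q * ((\<bar>real_of_int k\<bar> - 1) * (1/3)) \<le> q * (real_of_int c * N1)" using q0 by (intro mult_left_mono)
    then show ?thesis using qN by (simp add: algebra_simps)
  qed
  from q_bound[OF q0 qR this] have "q^2 * (1 + (real_of_int k)^2) \<le> 5 * (108 * (6*pi)^4)^2" .
  then show ?thesis unfolding q_def[symmetric] by (simp add: field_simps add_pos_nonneg)
qed

lemma floor_Ints: "(x::real) \<in> \<int> \<Longrightarrow> real_of_int \<lfloor>x\<rfloor> = x"
  by (metis Ints_cases floor_of_int)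



theorem lemmaG3:
  shows "\<exists>C::real. \<forall>(n::nat) (T::real set) (f::real) (l::nat).
    n \<ge> 2000 \<and>
    0.247 * real (m_of n) \<in> \<int> \<and> 0.339 * real (m_of n) \<in> \<int> \<and> 0.414 * real (m_of n) \<in> \<int> \<and>
    finite T \<and> T \<subseteq> {0..<1} \<and>
    (\<forall>t\<in>T. \<forall>t'\<in>T. t \<noteq> t' \<longrightarrow> wrap_dist t t' \<ge> 2.52 / (real n - 1)) \<and>
    f \<in> {0..1} \<and> l \<le> 3
    \<longrightarrow> vbar_norm n T l f \<le> C"
proof (intro exI allI impI)
  define R1 :: real where "R1 = 5 * (108 * (6*pi)^4)^2"
  fix n :: nat and T :: "real set" and f :: real and l :: nat
  assume H: "n \<ge> 2000 \<and>
    0.247 * real (m_of n) \<in> \<int> \<and> 0.339 * real (m_of n) \<in> \<int> \<and> 0.414 * real (m_of n) \<in> \<int> \<and>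
    finite T \<and> T \<subseteq> {0..<1} \<and>
    (\<forall>t\<in>T. \<forall>t'\<in>T. t \<noteq> t' \<longrightarrow> wrap_dist t t' \<ge> 2.52 / (real n - 1)) \<and>
    f \<in> {0..1} \<and> l \<le> 3"
  then have n: "n \<ge> 2000" and ia: "0.247 * real (m_of n) \<in> \<int>" and ib: "0.339 * real (m_of n) \<in> \<int>"
    and ic: "0.414 * real (m_of n) \<in> \<int>" and fin: "finite T"
    and sep: "\<And>t t'. t\<in>T \<Longrightarrow> t'\<in>T \<Longrightarrow> t \<noteq> t' \<Longrightarrow> wrap_dist t t' \<ge> 2.52 / (real n - 1)"
    and l: "l \<le> 3" by auto
  define mm where "mm = m_of n"
  define a where "a = \<lfloor>0.247 * real mm\<rfloor>"
  define b where "b = \<lfloor>0.339 * real mm\<rfloor>"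
  define c where "c = \<lfloor>0.414 * real mm\<rfloor>"
  have ra: "real_of_int a = 0.247 * real mm" unfolding a_def mm_def by (rule floor_Ints[OF ia])
  have rb: "real_of_int b = 0.339 * real mm" unfolding b_def mm_def by (rule floor_Ints[OF ib])
  have rc: "real_of_int c = 0.414 * real mm" unfolding c_def mm_def by (rule floor_Ints[OF ic])
  have mm1: "999 \<le> mm" and mmn: "n \<le> 2 * mm + 2"
    unfolding mm_def m_of_def using n by (auto elim: oddE evenE)
  have "0 \<le> real_of_int a" unfolding ra by simp
  then have a0: "0 \<le> a" by simp
  have "0 \<le> real_of_int b" unfolding rb by simp
  then have b0: "0 \<le> b" by simp
  have "1 \<le> real_of_int c" unfolding rc using mm1 by simp
  then have c1: "1 \<le> c" by simp
  have sumabc: "real_of_int (a+b+c) = real mm" using ra rb rc by simp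
  have m3: "real_of_int (a+b+c) \<le> 3 * real_of_int c" unfolding sumabc rc by simp
  have KK: "Kbar n = K3 a b c" unfolding Kbar_def K3_def[abs_def] a_def b_def c_def mm_def ..
  define \<kappa> where "\<kappa> = kappa n"
  have k0: "0 \<le> \<kappa>" unfolding \<kappa>_def kappa_def by simp
  have k1: "\<kappa> \<le> 1 / real_of_int c" unfolding \<kappa>_def kappa_def KK
    by (rule kappa_le) (use c1 hd2_K3_lower[OF a0 b0, of c] in auto)
  define \<delta> where "\<delta> = 2.52 / (real n - 1)"
  have nm: "real n - 1 \<le> 3 * real mm" using mmn mm1 by linarith
  have npos: "0 < real n - 1" using n by simp
  have d: "0 < \<delta>" unfolding \<delta>_def using npos by simp
  have cd: "1/3 \<le> real_of_int c * \<delta>"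
    unfolding \<delta>_def rc using nm npos by (simp add: field_simps)
  define x where "x t = (f - t) - of_int (round (f - t))" for t
  have sepx: "\<delta> \<le> \<bar>x t - x t'\<bar>" if "t \<in> T" "t' \<in> T" "t \<noteq> t'" for t t'
  proof -
    have "\<delta> \<le> wrap_dist t t'" unfolding \<delta>_def using sep[OF that] by simp
    also have "\<dots> \<le> \<bar>(t - t') - of_int (round (f - t') - round (f - t))\<bar>"
      unfolding wrap_dist_def by (rule round_min)
    also have "\<dots> = \<bar>x t - x t'\<bar>" unfolding x_def by (simp add: abs_minus_commute algebra_simps)
    finally show ?thesis .
  qed
  have hterm: "(norm (complex_of_real (kappa n ^ l) * higher_deriv l (Kbar n) (f - t)))\<^sup>2 +
      (norm (complex_of_real (kappa n ^ l * kappa n) * higher_deriv (Suc l) (Kbar n) (f - t)))\<^sup>2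
      \<le> (2 * R1) / (1 + (real_of_int k)^2)"
    if "t \<in> T" "(\<bar>real_of_int k\<bar> - 1) * \<delta> \<le> \<bar>x t\<bar>" for t k
  proof -
    have kk: "(\<bar>real_of_int k\<bar> - 1) * \<delta> \<le> \<bar>(f - t) - of_int (round (f - t))\<bar>" using that(2) unfolding x_def .
    have e1: "norm (complex_of_real (kappa n ^ l) * higher_deriv l (Kbar n) (f - t)) = \<kappa>^l * norm (higher_deriv l (K3 a b c) (f - t))"
      unfolding KK \<kappa>_def[symmetric] norm_mult norm_of_real using k0 by simp
    have e2: "norm (complex_of_real (kappa n ^ l * kappa n) * higher_deriv (Suc l) (Kbar n) (f - t)) = \<kappa>^(Suc l) * norm (higher_deriv (Suc l) (K3 a b c) (f - t))"
      unfolding KK \<kappa>_def[symmetric] norm_mult norm_of_real using k0 by (simp add: mult.commute)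
    have p1: "(\<kappa>^l * norm (higher_deriv l (K3 a b c) (f - t)))^2 \<le> R1 / (1 + (real_of_int k)^2)"
      unfolding R1_def by (rule per_point[OF a0 b0 c1 m3 k0 k1 _ d cd kk]) (use l in simp)
    have p2: "(\<kappa>^(Suc l) * norm (higher_deriv (Suc l) (K3 a b c) (f - t)))^2 \<le> R1 / (1 + (real_of_int k)^2)"
      unfolding R1_def by (rule per_point[OF a0 b0 c1 m3 k0 k1 _ d cd kk]) (use l in simp)
    show ?thesis unfolding e1 e2 using p1 p2 by (simp add: add_divide_distrib)
  qed
  have R10: "0 \<le> 2 * R1" unfolding R1_def by simp
  have S: "(\<Sum>t\<in>T. (norm (complex_of_real (kappa n ^ l) * higher_deriv l (Kbar n) (f - t)))\<^sup>2 +
      (norm (complex_of_real (kappa n ^ l * kappa n) * higher_deriv (Suc l) (Kbar n) (f - t)))\<^sup>2) \<le> 5 * (2 * R1)"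
    by (rule sep_sum[OF fin d sepx hterm R10])
  show "vbar_norm n T l f \<le> sqrt (5 * (2 * (5 * (108 * (6*pi)^4)^2)))"
    unfolding vbar_norm_def R1_def[symmetric] using S by (rule real_sqrt_le_mono)
qed


end
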